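(* Let $(X,\leq)$ be a bi-directed partially ordered set, let $d$ be a complete metric on $X$, and let $A:X^{2}\to X$ be a mixed monotone operator such that, for some $\varphi\in\Phi$, $$d\big(A(x,y),A(u,v)\big)\leq\varphi\big(\max\{d(x,u),d(y,v)\}\big)\quad\text{for all }x,y,u,v\in X\text{ with }x\leq u,\ y\geq v.$$ Assume that either (b1) $A$ is continuous (with respect to the product topology on $X^2$ induced by $d$), or (b2) every nondecreasing convergent sequence in $X$ is bounded from above by its limit, and every nonincreasing convergent sequence in $X$ is bounded from below by its limit. If there exist $x_{0},y_{0}\in X$ such that $x_{0}\leq A(x_{0},y_{0})$ and $y_{0}\geq A(y_{0},x_{0})$, then there exists $x^{\ast}\in X$ such that $(x^{\ast},x^{\ast})$ is the unique coupled fixed point of $A$ (in particular, $x^{\ast}$ is the unique fixed point of $A$), and $A^{n}(x,y)\to x^{\ast}$ as $n\to\infty$ for all $x,y\in X$.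
   Context: A quasi-ordered set $(X,\leq)$ is bi-directed if every two-element subset of $X$ has both a lower bound and an upper bound. An operator $A:X^2\to X$ is mixed monotone if it is nondecreasing in its first argument and nonincreasing in its second argument. A pair $(x,y)\in X^2$ is a coupled fixed point of $A$ if $A(x,y)=x$ and $A(y,x)=y$; $x$ is a fixed point of $A$ if $A(x,x)=x$. $\Phi$ denotes the set of nondecreasing functions $\varphi:[0,\infty)\to[0,\infty)$ such that $\varphi^{n}(t)\to0$ as $n\to\infty$ for every $t\geq0$, where $\varphi^n$ is the $n$-th iterate of $\varphi$. For bivariate operators $A:X^2\to Y$, $B:Y^2\to Z$, the symmetric composition is $(B\ast A)(x,y)=B(A(x,y),A(y,x))$. The iterates of $A:X^2\to X$ are defined by $A^{0}=P_X$, where $P_X(x,y)=x$, and $A^{n+1}=A\ast A^{n}$ for $n\geq0$. *)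

theory Defs
  imports "HOL-Analysis.Analysis"
begin

definition bi_directed :: "'a::order itself \<Rightarrow> bool" where
  "bi_directed _ \<longleftrightarrow> (\<forall>x y::'a. (\<exists>l. l \<le> x \<and> l \<le> y) \<and> (\<exists>u. x \<le> u \<and> y \<le> u))"

definition mixed_monotone :: "('a::order \<Rightarrow> 'a \<Rightarrow> 'a) \<Rightarrow> bool" where
  "mixed_monotone A \<longleftrightarrow>
     (\<forall>x x' y. x \<le> x' \<longrightarrow> A x y \<le> A x' y) \<and>
     (\<forall>x y y'. y \<le> y' \<longrightarrow> A x y' \<le> A x y)"

definition Phi :: "(real \<Rightarrow> real) set" where
  "Phi = {\<phi>. mono_on {0..} \<phi> \<and> (\<forall>t\<ge>0. \<phi> t \<ge> 0) \<and>
              (\<forall>t\<ge>0. (\<lambda>n. (\<phi> ^^ n) t) \<longlonglongrightarrow> 0)}"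

definition coupled_fixed_point :: "('a \<Rightarrow> 'a \<Rightarrow> 'a) \<Rightarrow> 'a \<Rightarrow> 'a \<Rightarrow> bool" where
  "coupled_fixed_point A x y \<longleftrightarrow> A x y = x \<and> A y x = y"

fun iter_op :: "('a \<Rightarrow> 'a \<Rightarrow> 'a) \<Rightarrow> nat \<Rightarrow> 'a \<Rightarrow> 'a \<Rightarrow> 'a" where
  "iter_op A 0 x y = x"
| "iter_op A (Suc n) x y = A (iter_op A n x y) (iter_op A n y x)"

end

theory Submission
  imports Defs
begin

lemma phi_facts:
  assumes phi: "\<phi> \<in> Phi"
  shows phimono: "\<And>s t. 0 \<le> s \<Longrightarrow> s \<le> t \<Longrightarrow> \<phi> s \<le> \<phi> t"
    and phinn: "\<And>t. 0 \<le> t \<Longrightarrow> 0 \<le> \<phi> t"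
    and phiconv: "\<And>t. 0 \<le> t \<Longrightarrow> (\<lambda>n. (\<phi> ^^ n) t) \<longlonglongrightarrow> 0"
  using phi unfolding Phi_def by (auto intro: mono_onD)

lemma phin_nn:
  assumes phi: "\<phi> \<in> Phi" shows "0 \<le> t \<Longrightarrow> 0 \<le> (\<phi> ^^ n) t"
  by (induction n) (auto intro: phinn[OF phi])

lemma phin_mono:
  assumes phi: "\<phi> \<in> Phi" shows "0 \<le> s \<Longrightarrow> s \<le> t \<Longrightarrow> (\<phi> ^^ n) s \<le> (\<phi> ^^ n) t"
proof (induction n)
  case (Suc n)
  then show ?case using phimono[OF phi] phin_nn[OF phi] by simp
qed simp

lemma phi_noinc:
  assumes phi: "\<phi> \<in> Phi" and c: "0 < c" "c \<le> \<phi> c"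
  shows False
proof -
  have "\<forall>n. c \<le> (\<phi> ^^ n) c"
  proof
    fix n show "c \<le> (\<phi> ^^ n) c"
    proof (induction n)
      case (Suc n)
      have "(\<phi> ^^ n) c \<le> (\<phi> ^^ n) (\<phi> c)" using phin_mono[OF phi] c by simp
      then show ?case using Suc by (simp add: funpow_Suc_right del: funpow.simps)
    qed simp
  qed
  hence "c \<le> 0" using LIMSEQ_le_const[OF phiconv[OF phi, of c]] c by auto
  thus False using c by simp
qed

lemma phi_lt: assumes phi: "\<phi> \<in> Phi" shows "0 < t \<Longrightarrow> \<phi> t < t"
  using phi_noinc[OF phi, of t] by force

lemma phi_le: assumes phi: "\<phi> \<in> Phi" shows "0 \<le> t \<Longrightarrow> \<phi> t \<le> t"
proof -
  assume t: "0 \<le> t"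
  show ?thesis
  proof (cases "t = 0")
    case True
    show ?thesis
    proof (rule ccontr)
      assume "\<not> \<phi> t \<le> t"
      hence "0 < \<phi> 0" using True by simp
      moreover have "\<phi> 0 \<le> \<phi> (\<phi> 0)" using phimono[OF phi, of 0 "\<phi> 0"] phinn[OF phi, of 0] by simp
      ultimately show False using phi_noinc[OF phi] by blast
    qed
  next
    case False thus ?thesis using phi_lt[OF phi, of t] t by simp
  qed
qed


theorem theorem2:
  fixes A :: "'a::{order, complete_space} \<Rightarrow> 'a \<Rightarrow> 'a"
    and \<phi> :: "real \<Rightarrow> real"
    and x0 y0 :: 'a
  assumes bidir: "bi_directed TYPE('a)"
    and mm: "mixed_monotone A"
    and phi: "\<phi> \<in> Phi"
    and contr: "\<forall>x y u v. x \<le> u \<and> v \<le> y \<longrightarrow>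
                  dist (A x y) (A u v) \<le> \<phi> (max (dist x u) (dist y v))"
    and b: "continuous_on UNIV (\<lambda>p. A (fst p) (snd p)) \<or>
            ((\<forall>(s::nat \<Rightarrow> 'a) L. incseq s \<and> s \<longlonglongrightarrow> L \<longrightarrow> (\<forall>n. s n \<le> L)) \<and>
             (\<forall>(s::nat \<Rightarrow> 'a) L. decseq s \<and> s \<longlonglongrightarrow> L \<longrightarrow> (\<forall>n. L \<le> s n)))"
    and init: "x0 \<le> A x0 y0" "A y0 x0 \<le> y0"
  shows "\<exists>xs. (\<forall>x y. coupled_fixed_point A x y \<longleftrightarrow> x = xs \<and> y = xs) \<and>
              (\<forall>z. A z z = z \<longleftrightarrow> z = xs) \<and>
              (\<forall>x y. (\<lambda>n. iter_op A n x y) \<longlonglongrightarrow> xs)"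
proof -
  define T where "T = (\<lambda>p::'a\<times>'a. (A (fst p) (snd p), A (snd p) (fst p)))"
  define D where "D = (\<lambda>p q::'a\<times>'a. max (dist (fst p) (fst q)) (dist (snd p) (snd q)))"
  define R where "R = (\<lambda>p q::'a\<times>'a. fst p \<le> fst q \<and> snd q \<le> snd p)"
  have D_nn: "\<And>p q. 0 \<le> D p q" unfolding D_def by (simp add: le_max_iff_disj)
  have D_sym: "\<And>p q. D p q = D q p" unfolding D_def by (simp add: dist_commute)
  have D_self: "\<And>p. D p p = 0" unfolding D_def by simp
  have D_fst: "\<And>p q. dist (fst p) (fst q) \<le> D p q" unfolding D_def by simp
  have D_snd: "\<And>p q. dist (snd p) (snd q) \<le> D p q" unfolding D_def by simp
  have D_tri: "\<And>p q r. D p r \<le> D p q + D q r"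
  proof -
    fix p q r :: "'a\<times>'a"
    have "dist (fst p) (fst r) \<le> D p q + D q r"
      using dist_triangle[of "fst p" "fst r" "fst q"] D_fst[of p q] D_fst[of q r] by linarith
    moreover have "dist (snd p) (snd r) \<le> D p q + D q r"
      using dist_triangle[of "snd p" "snd r" "snd q"] D_snd[of p q] D_snd[of q r] by linarith
    ultimately show "D p r \<le> D p q + D q r" unfolding D_def by simp
  qed
  have D_zero: "\<And>p q. D p q \<le> 0 \<Longrightarrow> p = q"
  proof -
    fix p q assume "D p q \<le> 0"
    hence "dist (fst p) (fst q) = 0" "dist (snd p) (snd q) = 0"
      using D_fst[of p q] D_snd[of p q] zero_le_dist[of "fst p" "fst q"] zero_le_dist[of "snd p" "snd q"] by linarith+
    thus "p = q" by (simp add: prod_eq_iff)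
  qed
  have R_trans: "\<And>p q r. R p q \<Longrightarrow> R q r \<Longrightarrow> R p r" unfolding R_def by (auto intro: order_trans)
  have R_refl: "\<And>p. R p p" unfolding R_def by simp
  have mm1: "\<And>x x' y. x \<le> x' \<Longrightarrow> A x y \<le> A x' y" and mm2: "\<And>x y y'. y \<le> y' \<Longrightarrow> A x y' \<le> A x y"
    using mm unfolding mixed_monotone_def by auto
  have R_T: "\<And>p q. R p q \<Longrightarrow> R (T p) (T q)"
  proof -
    fix p q assume "R p q"
    hence h: "fst p \<le> fst q" "snd q \<le> snd p" unfolding R_def by auto
    have "A (fst p) (snd p) \<le> A (fst q) (snd q)"
      using mm1[OF h(1), of "snd p"] mm2[OF h(2), of "fst q"] by (rule order_trans)
    moreover have "A (snd q) (fst q) \<le> A (snd p) (fst p)"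
      using mm1[OF h(2), of "fst q"] mm2[OF h(1), of "snd p"] by (rule order_trans)
    ultimately show "R (T p) (T q)" unfolding R_def T_def by simp
  qed
  have DT: "\<And>p q. R p q \<Longrightarrow> D (T p) (T q) \<le> \<phi> (D p q)"
  proof -
    fix p q assume "R p q"
    hence h: "fst p \<le> fst q" "snd q \<le> snd p" unfolding R_def by auto
    have "dist (A (fst p) (snd p)) (A (fst q) (snd q)) \<le> \<phi> (D p q)"
      using contr h unfolding D_def by auto
    moreover have "dist (A (snd q) (fst q)) (A (snd p) (fst p)) \<le> \<phi> (D p q)"
    proof -
      have "dist (A (snd q) (fst q)) (A (snd p) (fst p)) \<le> \<phi> (max (dist (snd q) (snd p)) (dist (fst q) (fst p)))"
        using contr h by blast
      thus ?thesis unfolding D_def by (simp add: dist_commute max.commute)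
    qed
    ultimately show "D (T p) (T q) \<le> \<phi> (D p q)" unfolding D_def T_def
      by (simp add: dist_commute)
  qed
  have DT_le: "\<And>p q. R p q \<Longrightarrow> D (T p) (T q) \<le> D p q"
    using DT phi_le[OF phi] D_nn order_trans by blast
  have RTn: "\<And>n p q. R p q \<Longrightarrow> R ((T^^n) p) ((T^^n) q)"
  proof -
    fix n p q assume "R p q" thus "R ((T^^n) p) ((T^^n) q)" by (induction n) (auto intro: R_T)
  qed
  have DTn: "\<And>n p q. R p q \<Longrightarrow> D ((T^^n) p) ((T^^n) q) \<le> (\<phi>^^n) (D p q)"
  proof -
    fix n p q assume r: "R p q"
    show "D ((T^^n) p) ((T^^n) q) \<le> (\<phi>^^n) (D p q)"
    proof (induction n)
      case 0 then show ?case by simp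
    next
      case (Suc n)
      have "D ((T^^Suc n) p) ((T^^Suc n) q) \<le> \<phi> (D ((T^^n) p) ((T^^n) q))"
        using DT[OF RTn[OF r, of n]] by simp
      also have "\<dots> \<le> \<phi> ((\<phi>^^n) (D p q))" using phimono[OF phi] D_nn Suc by blast
      finally show ?case by simp
    qed
  qed
  have DTn0: "\<And>p q. R p q \<Longrightarrow> (\<lambda>n. D ((T^^n) p) ((T^^n) q)) \<longlonglongrightarrow> 0"
  proof -
    fix p q assume r: "R p q"
    show "(\<lambda>n. D ((T^^n) p) ((T^^n) q)) \<longlonglongrightarrow> 0"
      by (rule tendsto_sandwich[of "\<lambda>_. 0" _ _ "\<lambda>n. (\<phi>^^n) (D p q)"])
        (auto simp: D_nn DTn[OF r] phiconv[OF phi] D_nn)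
  qed
  have iter: "\<And>n x y. iter_op A n x y = fst ((T^^n) (x,y)) \<and> iter_op A n y x = snd ((T^^n) (x,y))"
  proof -
    fix n x y show "iter_op A n x y = fst ((T^^n) (x,y)) \<and> iter_op A n y x = snd ((T^^n) (x,y))"
      by (induction n) (auto simp: T_def)
  qed
  have fixn: "\<And>n p. T p = p \<Longrightarrow> (T^^n) p = p"
  proof -
    fix n p assume "T p = p" thus "(T^^n) p = p" by (induction n) auto
  qed
  define p0 where "p0 = (x0, y0)"
  define P where "P n = (T^^n) p0" for n
  have Rp0: "R p0 (T p0)" using init unfolding R_def T_def p0_def by simp
  have PSuc: "\<And>n. P (Suc n) = T (P n)" unfolding P_def by simp
  have RP: "\<And>n. R (P n) (P (Suc n))"
    using RTn[OF Rp0] unfolding P_def by (simp add: funpow_Suc_right del: funpow.simps)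
  have RPm: "\<And>m n. m \<le> n \<Longrightarrow> R (P m) (P n)"
  proof -
    fix m n :: nat assume "m \<le> n"
    thus "R (P m) (P n)"
    proof (induction n rule: dec_induct)
      case base then show ?case by (rule R_refl)
    next
      case (step n) then show ?case using RP R_trans by blast
    qed
  qed
  have Dstep: "(\<lambda>n. D (P n) (P (Suc n))) \<longlonglongrightarrow> 0"
    using DTn0[OF Rp0] unfolding P_def by (simp add: funpow_Suc_right del: funpow.simps)
  have cauchyD: "\<And>e. 0 < e \<Longrightarrow> \<exists>N. \<forall>m\<ge>N. \<forall>n\<ge>N. D (P m) (P n) < e"
  proof -
    fix e :: real assume e: "0 < e"
    define \<epsilon> where "\<epsilon> = e / 3"
    have eps: "0 < \<epsilon>" using e unfolding \<epsilon>_def by simp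
    have "\<phi> \<epsilon> < \<epsilon>" using phi_lt[OF phi eps] .
    hence "0 < \<epsilon> - \<phi> \<epsilon>" by simp
    from order_tendstoD(2)[OF Dstep this] obtain N where N: "D (P N) (P (Suc N)) < \<epsilon> - \<phi> \<epsilon>"
      unfolding eventually_sequentially by auto
    have ball: "\<And>m. N \<le> m \<Longrightarrow> D (P N) (P m) \<le> \<epsilon>"
    proof -
      fix m assume "N \<le> m"
      thus "D (P N) (P m) \<le> \<epsilon>"
      proof (induction m rule: dec_induct)
        case base then show ?case using D_self eps by simp
      next
        case (step m)
        have "D (P (Suc N)) (P (Suc m)) \<le> \<phi> (D (P N) (P m))"
          using DT[OF RPm[OF step(1)]] PSuc by simp
        also have "\<dots> \<le> \<phi> \<epsilon>" using phimono[OF phi] D_nn step(3) by blast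
        finally have "D (P (Suc N)) (P (Suc m)) \<le> \<phi> \<epsilon>" .
        thus ?case using D_tri[where p="P N" and q="P (Suc N)" and r="P (Suc m)"] N by linarith
      qed
    qed
    show "\<exists>N. \<forall>m\<ge>N. \<forall>n\<ge>N. D (P m) (P n) < e"
    proof (intro exI allI impI)
      fix m n assume "N \<le> m" "N \<le> n"
      hence "D (P m) (P n) \<le> 2 * \<epsilon>"
        using D_tri[where p="P m" and q="P N" and r="P n"] ball[of m] ball[of n] D_sym[of "P m" "P N"] by linarith
      thus "D (P m) (P n) < e" using e unfolding \<epsilon>_def by linarith
    qed
  qed
  have "Cauchy (\<lambda>n. fst (P n))"
    by (rule metric_CauchyI) (metis cauchyD D_fst le_less_trans)
  then obtain xs where xs: "(\<lambda>n. fst (P n)) \<longlonglongrightarrow> xs"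
    using Cauchy_convergent convergent_def by blast
  have "Cauchy (\<lambda>n. snd (P n))"
    by (rule metric_CauchyI) (metis cauchyD D_snd le_less_trans)
  then obtain ys where ys: "(\<lambda>n. snd (P n)) \<longlonglongrightarrow> ys"
    using Cauchy_convergent convergent_def by blast
  define ps where "ps = (xs, ys)"
  have Dlim: "(\<lambda>n. D (P n) ps) \<longlonglongrightarrow> 0"
  proof -
    have "(\<lambda>n. max (dist (fst (P n)) xs) (dist (snd (P n)) ys)) \<longlonglongrightarrow> max 0 0"
      using xs ys by (intro tendsto_max) (auto simp: tendsto_dist_iff[symmetric])
    thus ?thesis unfolding D_def ps_def by simp
  qed
  have DlimS: "(\<lambda>n. D (P (Suc n)) ps) \<longlonglongrightarrow> 0" using LIMSEQ_Suc[OF Dlim] .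
  have Tps: "T ps = ps"
    using b
  proof
    assume cont: "continuous_on UNIV (\<lambda>p. A (fst p) (snd p))"
    have PP: "(\<lambda>n. (fst (P n), snd (P n))) \<longlonglongrightarrow> (xs, ys)" using xs ys by (rule tendsto_Pair)
    have PP': "(\<lambda>n. (snd (P n), fst (P n))) \<longlonglongrightarrow> (ys, xs)" using ys xs by (rule tendsto_Pair)
    have "(\<lambda>n. A (fst (P n)) (snd (P n))) \<longlonglongrightarrow> A xs ys"
      using continuous_on_tendsto_compose[OF cont PP] by simp
    moreover have "(\<lambda>n. A (fst (P n)) (snd (P n))) = (\<lambda>n. fst (P (Suc n)))"
      using PSuc unfolding T_def by simp
    ultimately have 1: "A xs ys = xs" using LIMSEQ_unique LIMSEQ_Suc[OF xs] by metis
    have "(\<lambda>n. A (snd (P n)) (fst (P n))) \<longlonglongrightarrow> A ys xs"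
      using continuous_on_tendsto_compose[OF cont PP'] by simp
    moreover have "(\<lambda>n. A (snd (P n)) (fst (P n))) = (\<lambda>n. snd (P (Suc n)))"
      using PSuc unfolding T_def by simp
    ultimately have 2: "A ys xs = ys" using LIMSEQ_unique LIMSEQ_Suc[OF ys] by metis
    show "T ps = ps" using 1 2 unfolding T_def ps_def by simp
  next
    assume b2: "(\<forall>(s::nat \<Rightarrow> 'a) L. incseq s \<and> s \<longlonglongrightarrow> L \<longrightarrow> (\<forall>n. s n \<le> L)) \<and>
             (\<forall>(s::nat \<Rightarrow> 'a) L. decseq s \<and> s \<longlonglongrightarrow> L \<longrightarrow> (\<forall>n. L \<le> s n))"
    have inc: "incseq (\<lambda>n. fst (P n))" by (rule incseq_SucI) (use RP in \<open>auto simp: R_def\<close>)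
    have dec: "decseq (\<lambda>n. snd (P n))" by (rule decseq_SucI) (use RP in \<open>auto simp: R_def\<close>)
    have RPps: "\<And>n. R (P n) ps"
    proof -
      fix n
      have "fst (P n) \<le> xs" using b2 inc xs by blast
      moreover have "ys \<le> snd (P n)" using conjunct2[OF b2] dec ys by blast
      ultimately show "R (P n) ps" unfolding R_def ps_def by simp
    qed
    have "(\<lambda>n. D (P (Suc n)) (T ps)) \<longlonglongrightarrow> 0"
      by (rule tendsto_sandwich[of "\<lambda>_. 0" _ _ "\<lambda>n. D (P n) ps"])
        (simp_all add: D_nn Dlim PSuc DT_le[OF RPps])
    hence "(\<lambda>n. D ps (P (Suc n)) + D (P (Suc n)) (T ps)) \<longlonglongrightarrow> 0 + 0"
      using DlimS by (intro tendsto_add) (auto simp: D_sym)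
    hence "(\<lambda>n. D ps (P (Suc n)) + D (P (Suc n)) (T ps)) \<longlonglongrightarrow> 0" by simp
    hence "D ps (T ps) \<le> 0"
      by (rule LIMSEQ_le_const[where a="D ps (T ps)"]) (intro exI allI impI D_tri)
    thus "T ps = ps" using D_zero D_sym by metis
  qed
  have attract: "\<And>q. (\<lambda>n. D ((T^^n) q) ps) \<longlonglongrightarrow> 0"
  proof -
    fix q :: "'a\<times>'a"
    obtain l where l: "l \<le> fst q" "l \<le> xs" using bidir unfolding bi_directed_def by blast
    obtain u where u: "snd q \<le> u" "ys \<le> u" using bidir unfolding bi_directed_def by blast
    define r where "r = (l, u)"
    have r1: "R r q" and r2: "R r ps" using l u unfolding R_def r_def ps_def by auto
    have c1: "(\<lambda>n. D ((T^^n) q) ((T^^n) r)) \<longlonglongrightarrow> 0"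
    proof -
      have "(\<lambda>n. D ((T^^n) q) ((T^^n) r)) = (\<lambda>n. D ((T^^n) r) ((T^^n) q))"
        using D_sym by blast
      thus ?thesis using DTn0[OF r1] by simp
    qed
    have c2: "(\<lambda>n. D ((T^^n) r) ps) \<longlonglongrightarrow> 0"
      using DTn0[OF r2] fixn[OF Tps] by simp
    have c3: "(\<lambda>n. D ((T^^n) q) ((T^^n) r) + D ((T^^n) r) ps) \<longlonglongrightarrow> 0"
      using tendsto_add[OF c1 c2] by simp
    have e1: "\<forall>\<^sub>F n in sequentially. (0::real) \<le> D ((T^^n) q) ps" using D_nn by simp
    have e2: "\<forall>\<^sub>F n in sequentially. D ((T^^n) q) ps \<le> D ((T^^n) q) ((T^^n) r) + D ((T^^n) r) ps"
      by (intro always_eventually allI D_tri)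
    show "(\<lambda>n. D ((T^^n) q) ps) \<longlonglongrightarrow> 0"
      by (rule tendsto_sandwich[OF e1 e2 tendsto_const c3])
  qed
  have uniq: "\<And>q. T q = q \<Longrightarrow> q = ps"
  proof -
    fix q assume "T q = q"
    hence "(\<lambda>n. D q ps) \<longlonglongrightarrow> 0" using attract[of q] fixn by simp
    hence "D q ps \<le> 0" by (rule LIMSEQ_le_const) simp
    thus "q = ps" by (rule D_zero)
  qed
  have "T (ys, xs) = (ys, xs)" using Tps unfolding T_def ps_def by simp
  hence "(ys, xs) = ps" by (rule uniq)
  hence yx: "ys = xs" unfolding ps_def by (rule Pair_inject)
  have cfp: "\<And>x y. coupled_fixed_point A x y \<longleftrightarrow> x = xs \<and> y = xs"
  proof -
    fix x y
    have "coupled_fixed_point A x y \<longleftrightarrow> T (x,y) = (x,y)"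
      unfolding coupled_fixed_point_def T_def by (simp add: prod_eq_iff)
    also have "\<dots> \<longleftrightarrow> x = xs \<and> y = xs"
    proof
      assume "T (x,y) = (x,y)"
      hence "(x,y) = ps" by (rule uniq)
      thus "x = xs \<and> y = xs" using yx unfolding ps_def by simp
    next
      assume "x = xs \<and> y = xs"
      thus "T (x,y) = (x,y)" using Tps yx unfolding ps_def by simp
    qed
    finally show "coupled_fixed_point A x y \<longleftrightarrow> x = xs \<and> y = xs" .
  qed
  show ?thesis
  proof (intro exI conjI allI)
    fix x y show "coupled_fixed_point A x y \<longleftrightarrow> x = xs \<and> y = xs" by (rule cfp)
  next
    fix z show "A z z = z \<longleftrightarrow> z = xs" using cfp[of z z] unfolding coupled_fixed_point_def by auto
  next
    fix x y
    have e1: "\<forall>\<^sub>F n in sequentially. (0::real) \<le> dist (fst ((T^^n) (x,y))) xs" by simp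
    have e2: "\<forall>\<^sub>F n in sequentially. dist (fst ((T^^n) (x,y))) xs \<le> D ((T^^n) (x,y)) ps"
      using D_fst[where q=ps] unfolding ps_def by (intro always_eventually allI) simp
    have "(\<lambda>n. dist (fst ((T^^n) (x,y))) xs) \<longlonglongrightarrow> 0"
      by (rule tendsto_sandwich[OF e1 e2 tendsto_const attract])
    hence L: "(\<lambda>n. fst ((T^^n) (x,y))) \<longlonglongrightarrow> xs" by (rule tendsto_dist_iff[THEN iffD2])
    have E: "(\<lambda>n. iter_op A n x y) = (\<lambda>n. fst ((T^^n) (x,y)))" using iter by blast
    show "(\<lambda>n. iter_op A n x y) \<longlonglongrightarrow> xs" unfolding E by (rule L)
  qed
qed

end
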